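(* Let $k\ge 1$ and let $U$ be a nonempty $k$-unitrade. Then $|U|\ge k+1$, and if $|U|=k+1$ or $|{\rm supp}(U)|=k+1$ then $U$ is equivalent to $W_k$.
   Context: A $k$-unitrade on a finite set $V$ is a set $U$ of $k$-element subsets (blocks) of $V$ such that every $(k-1)$-element subset of $V$ is contained in an even number of blocks of $U$. ${\rm supp}(U)=\bigcup_{u\in U}u$. Two collections $U_1$ of subsets of $V_1$ and $U_2$ of subsets of $V_2$ are equivalent if there is an injection $f:V_1\to V_2$ with $U_2=\{f(u): u\in U_1\}$. $W_k$ denotes the set of all $k$-element subsets of a $(k+1)$-element set. *)

theory Defs
  imports Main
begin

definition unitrade :: "nat \<Rightarrow> 'a set \<Rightarrow> 'a set set \<Rightarrow> bool" where
  "unitrade k V U \<longleftrightarrow> finite V \<and> (\<forall>u\<in>U. u \<subseteq> V \<and> card u = k) \<and>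
     (\<forall>T. T \<subseteq> V \<and> card T = k - 1 \<longrightarrow> even (card {u\<in>U. T \<subseteq> u}))"

definition supp :: "'a set set \<Rightarrow> 'a set" where
  "supp U = \<Union>U"

definition equivalent :: "'a set \<Rightarrow> 'a set set \<Rightarrow> 'b set \<Rightarrow> 'b set set \<Rightarrow> bool" where
  "equivalent V1 U1 V2 U2 \<longleftrightarrow>
     (\<exists>f. inj_on f V1 \<and> f ` V1 \<subseteq> V2 \<and> U2 = (\<lambda>u. f ` u) ` U1)"

definition W :: "nat \<Rightarrow> 'b set \<Rightarrow> 'b set set" where
  "W k X = {u. u \<subseteq> X \<and> card u = k}"

end

theory Submission
  imports Defs
begin

lemma card_W:
  assumes "finite S" "card S = k + 1"
  shows "card (W k S) = k + 1" "finite (W k S)"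
proof -
  show "card (W k S) = k + 1" unfolding W_def using n_subsets[OF assms(1), of k] assms(2) by simp
  show "finite (W k S)" unfolding W_def by (rule finite_subset[of _ "Pow S"]) (use assms(1) in auto)
qed

lemma W_equiv:
  assumes "finite S" "card S = k + 1"
  shows "\<exists>X :: nat set. finite X \<and> card X = k + 1 \<and> equivalent S (W k S) X (W k X)"
proof -
  obtain f where f: "bij_betw f S {0..<card S}" using ex_bij_betw_finite_nat[OF assms(1)] by blast
  define X where "X = {0..<card S}"
  have fX: "bij_betw f S X" using f X_def by simp
  have P: "bij_betw (image f) (Pow S) (Pow X)" using bij_betw_Pow[OF fX] .
  have WX: "W k X = (\<lambda>u. f ` u) ` W k S"
  proof
    show "(\<lambda>u. f ` u) ` W k S \<subseteq> W k X"
    proof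
      fix v assume "v \<in> (\<lambda>u. f ` u) ` W k S"
      then obtain u where u: "u \<subseteq> S" "card u = k" "v = f ` u" unfolding W_def by auto
      have "inj_on f u" using fX u(1) by (meson bij_betw_def inj_on_subset)
      then have "card (f ` u) = card u" by (rule card_image)
      then have "card v = k" using u by simp
      moreover have "v \<subseteq> X" using u fX bij_betw_imp_surj_on by blast
      ultimately show "v \<in> W k X" unfolding W_def by auto
    qed
  next
    show "W k X \<subseteq> (\<lambda>u. f ` u) ` W k S"
    proof
      fix v assume v: "v \<in> W k X"
      then have "v \<in> Pow X" unfolding W_def by auto
      then have "v \<in> (\<lambda>u. f ` u) ` Pow S" using bij_betw_imp_surj_on[OF P] by simp
      then obtain u where u: "u \<in> Pow S" "v = f ` u" by (rule imageE)
      have "inj_on f u" using fX u(1) by (meson PowD bij_betw_def inj_on_subset)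
      then have "card (f ` u) = card u" by (rule card_image)
      moreover have "card v = k" using v unfolding W_def by simp
      ultimately have "card u = k" using u(2) by simp
      then show "v \<in> (\<lambda>u. f ` u) ` W k S" using u unfolding W_def by auto
    qed
  qed
  have i1: "inj_on f S" using fX unfolding bij_betw_def by simp
  have i2: "f ` S \<subseteq> X" using fX unfolding bij_betw_def by simp
  have e: "equivalent S (W k S) X (W k X)" unfolding equivalent_def
    by (rule exI[of _ f]) (use i1 i2 WX in simp)
  have f1: "finite X" unfolding X_def by simp
  have f2: "card X = k + 1" using assms X_def by simp
  show ?thesis
    by (rule exI[of _ X], intro conjI, rule f1, rule f2, rule e)
qed

theorem proposition9:
  fixes V :: "'a set" and U :: "'a set set" and k :: nat
  assumes "k \<ge> 1" and "unitrade k V U" and "U \<noteq> {}"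
  shows "card U \<ge> k + 1 \<and>
    ((card U = k + 1 \<or> card (supp U) = k + 1) \<longrightarrow>
      (\<exists>X :: nat set. finite X \<and> card X = k + 1 \<and>
         equivalent (supp U) U X (W k X)))"
proof -
  have fV: "finite V" and blk: "\<And>w. w \<in> U \<Longrightarrow> w \<subseteq> V \<and> card w = k"
    and ev: "\<And>T. T \<subseteq> V \<Longrightarrow> card T = k - 1 \<Longrightarrow> even (card {w\<in>U. T \<subseteq> w})"
    using assms(2) unfolding unitrade_def by auto
  have "U \<subseteq> Pow V" using blk by auto
  then have fU: "finite U" using finite_subset[of U "Pow V"] fV by simp
  obtain u where uU: "u \<in> U" using assms(3) by blast
  have uV: "u \<subseteq> V" and cu: "card u = k" using blk uU by auto
  have fu: "finite u" using finite_subset[of u V] uV fV by simp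
  have ex: "\<exists>w. w \<in> U \<and> w \<noteq> u \<and> u - {x} \<subseteq> w" if x: "x \<in> u" for x
  proof (rule ccontr)
    assume "\<not> ?thesis"
    then have "{w\<in>U. u - {x} \<subseteq> w} = {u}" using uU by auto
    moreover have "even (card {w\<in>U. u - {x} \<subseteq> w})"
      using ev[of "u - {x}"] uV cu x fu by auto
    ultimately show False by simp
  qed
  define g where "g x = (SOME w. w \<in> U \<and> w \<noteq> u \<and> u - {x} \<subseteq> w)" for x
  have g: "g x \<in> U \<and> g x \<noteq> u \<and> u - {x} \<subseteq> g x" if "x \<in> u" for x
    unfolding g_def using someI_ex[OF ex[OF that]] .
  have gx: "x \<notin> g x" if x: "x \<in> u" for x
  proof
    assume "x \<in> g x"
    then have "u \<subseteq> g x" using g[OF x] by auto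
    moreover have gb: "g x \<subseteq> V \<and> card (g x) = k" using g[OF x] blk by blast
    moreover have "finite (g x)" using finite_subset[of "g x" V] gb fV by simp
    ultimately have "u = g x" using cu card_subset_eq by metis
    then show False using g[OF x] by auto
  qed
  have gu: "g x \<inter> u = u - {x}" if x: "x \<in> u" for x using g[OF x] gx[OF x] by auto
  have ginj: "inj_on g u"
  proof
    fix x x' assume "x \<in> u" "x' \<in> u" "g x = g x'"
    then have "u - {x} = u - {x'}" using gu by metis
    then show "x = x'" using \<open>x \<in> u\<close> \<open>x' \<in> u\<close> by blast
  qed
  have sub: "insert u (g ` u) \<subseteq> U" using uU g by auto
  have ucard: "card (insert u (g ` u)) = k + 1"
  proof -
    have "u \<notin> g ` u" using g by blast
    moreover have "finite (g ` u)" using fu by simp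
    ultimately have "card (insert u (g ` u)) = Suc (card (g ` u))" by simp
    moreover have "card (g ` u) = card u" using ginj by (rule card_image)
    ultimately show ?thesis using cu by simp
  qed
  have main1: "card U \<ge> k + 1" using card_mono[OF fU sub] ucard by simp
  have fin: "\<exists>X :: nat set. finite X \<and> card X = k + 1 \<and> equivalent (supp U) U X (W k X)"
    if "card U = k + 1 \<or> card (supp U) = k + 1"
  proof -
    have "\<exists>S. finite S \<and> card S = k + 1 \<and> U = W k S \<and> supp U = S"
    proof (cases "card U = k + 1")
      case True
      have Ueq: "U = insert u (g ` u)"
        using card_subset_eq[OF fU sub] ucard True by simp
      have gfin: "finite (g x)" "card (g x) = k" "g x \<subseteq> V" if "x \<in> u" for x
      proof -
        have gb: "g x \<subseteq> V \<and> card (g x) = k" using g[OF that] blk by blast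
        then show "finite (g x)" using finite_subset[of "g x" V] fV by simp
        show "card (g x) = k" "g x \<subseteq> V" using gb by simp_all
      qed
      have c1: "card (g x - u) = 1" if x: "x \<in> u" for x
      proof -
        have "card (g x - u) = card (g x) - card (g x \<inter> u)"
          using card_Diff_subset_Int gfin[OF x] by (simp add: card_Diff_subset_Int)
        also have "\<dots> = k - (k - 1)" using gu[OF x] gfin[OF x] cu fu x by simp
        finally show ?thesis using assms(1) by simp
      qed
      define y where "y x = the_elem (g x - u)" for x
      have ydef: "g x - u = {y x}" if x: "x \<in> u" for x
        using c1[OF x] unfolding y_def by (metis card_1_singletonE the_elem_eq)
      have gy: "g x = insert (y x) (u - {x})" "y x \<notin> u" if x: "x \<in> u" for x
        using ydef[OF x] gu[OF x] by blast+
      have yeq: "y x = y x'" if x: "x \<in> u" and x': "x' \<in> u" for x x'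
      proof (rule ccontr)
        assume ne: "y x \<noteq> y x'"
        then have xx: "x \<noteq> x'" by auto
        define T where "T = insert (y x) (u - {x, x'})"
        have "card (u - {x, x'}) = k - 2" using cu fu x x' xx by (simp add: card_Diff_subset)
        moreover have "card u \<ge> 2"
        proof -
          have "{x, x'} \<subseteq> u" using x x' by auto
          then have "card {x, x'} \<le> card u" using card_mono[OF fu] by blast
          then show ?thesis using xx by simp
        qed
        ultimately have cT: "card T = k - 1" unfolding T_def using fu gy(2)[OF x] cu by simp
        have TV: "T \<subseteq> V" unfolding T_def using gy[OF x] gfin(3)[OF x] uV by auto
        have "{w\<in>U. T \<subseteq> w} = {g x}"
        proof
          show "{g x} \<subseteq> {w\<in>U. T \<subseteq> w}" using g[OF x] gy[OF x] unfolding T_def by auto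
        next
          show "{w\<in>U. T \<subseteq> w} \<subseteq> {g x}"
          proof
            fix w assume w: "w \<in> {w\<in>U. T \<subseteq> w}"
            then have wU: "w \<in> insert u (g ` u)" and Tw: "T \<subseteq> w" using Ueq by auto
            have "w \<noteq> u" using Tw gy(2)[OF x] unfolding T_def by auto
            then obtain z where z: "z \<in> u" "w = g z" using wU by auto
            have "y x \<in> g z" using Tw z unfolding T_def by auto
            then have yz: "y x = y z" using gy[OF z(1)] gy(2)[OF x] by auto
            have "z \<in> {x, x'}"
            proof (rule ccontr)
              assume "z \<notin> {x, x'}"
              then have "z \<in> T" unfolding T_def using z by auto
              then have "z \<in> g z" using Tw z by auto
              then show False using gx z by auto
            qed
            then have "z = x" using yz ne by auto
            then show "w \<in> {g x}" using z by auto
          qed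
        qed
        then show False using ev[OF TV cT] by simp
      qed
      obtain x0 where x0: "x0 \<in> u" using cu assms(1) by fastforce
      define S where "S = insert (y x0) u"
      have cS: "card S = k + 1" "finite S" unfolding S_def using gy(2)[OF x0] fu cu by auto
      have "U \<subseteq> W k S"
      proof
        fix w assume "w \<in> U"
        then have "w = u \<or> (\<exists>z\<in>u. w = g z)" using Ueq by auto
        moreover have "g z \<subseteq> S" if z: "z \<in> u" for z
        proof -
          have "g z = insert (y z) (u - {z})" using gy(1)[OF z] .
          moreover have "y z = y x0" using yeq[OF z x0] .
          ultimately show ?thesis unfolding S_def by auto
        qed
        ultimately have "w \<subseteq> S" unfolding S_def by blast
        then show "w \<in> W k S" using blk \<open>w \<in> U\<close> unfolding W_def by auto
      qed
      then have UW: "U = W k S" using card_subset_eq[OF card_W(2)[OF cS(2,1)]] card_W(1)[OF cS(2,1)] True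
        by metis
      have "supp U = S"
      proof
        show "supp U \<subseteq> S" using UW unfolding supp_def W_def by auto
        show "S \<subseteq> supp U" unfolding supp_def S_def using uU g[OF x0] gy[OF x0] by auto
      qed
      then show ?thesis using UW cS by blast
    next
      case False
      then have cS: "card (supp U) = k + 1" using that by simp
      have "supp U \<subseteq> V" unfolding supp_def using blk by blast
      then have fS: "finite (supp U)" using finite_subset[of "supp U" V] fV by simp
      have "U \<subseteq> W k (supp U)" using blk unfolding W_def supp_def by auto
      then have "U = W k (supp U)" using card_seteq[OF card_W(2)[OF fS cS]] card_W(1)[OF fS cS] main1
        by metis
      then show ?thesis using fS cS by blast
    qed
    then obtain S where "finite S" "card S = k + 1" "U = W k S" "supp U = S" by blast
    then show ?thesis using W_equiv by metis
  qed
  show ?thesis using main1 fin by blast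
qed
end
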